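(* Suppose QEPmin is in the hard case, and let $(\lambda_*,z_* )$ be a minimizer of QEPmin with $b_0^{\top}z_*=0$. Then: (1) $\lambda_*=\lambda_{\min}(H)$, the smallest eigenvalue of $H$; (2) $g_0\perp\mathcal U$, where $\mathcal U$ is the eigenspace of $H$ associated with $\lambda_{\min}(H)$; (3) $b_0\perp\mathcal V$, where $\mathcal V$ is the eigenspace of $PAP$ associated with its eigenvalue $\lambda_{\min}(H)\in\operatorname{eig}(PAP)$.
   Context: Let $A\in\mathbb{R}^{n\times n}$ be symmetric, $C\in\mathbb{R}^{n\times m}$ ($m<n$) full column rank, $b\in\mathbb{R}^m$, $n_0=C(C^{\top}C)^{-1}b$ with $\|n_0\|<1$, $\gamma=\sqrt{1-\|n_0\|^2}$, $P=I-C(C^{\top}C)^{-1}C^{\top}$ (orthogonal projector onto $\mathcal N(C^{\top})$), $b_0=PAn_0$, assumed nonzero. Let $S_1\in\mathbb{R}^{n\times(n-m)}$ have orthonormal columns spanning $\mathcal N(C^{\top})$, $H=S_1^{\top}AS_1$, $g_0=S_1^{\top}b_0$. QEPmin: minimize $\lambda$ over pairs $(\lambda,z)$ with $\lambda\in\mathbb{R}$, $0\neq z\in\mathcal N(C^{\top})$ and $(PAP-\lambda I)^2z=\gamma^{-2}b_0b_0^{\top}z$. QEPmin is in the hard case if it has a minimizer $(\lambda_*,z_* )$ with $b_0^{\top}z_*=0$; otherwise in the easy case. *)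

theory Defs
  imports "HOL-Analysis.Analysis"
begin

definition mat_eigenvalue :: "real^'n^'n \<Rightarrow> real \<Rightarrow> bool" where
  "mat_eigenvalue M l \<longleftrightarrow> (\<exists>v. v \<noteq> 0 \<and> M *v v = l *\<^sub>R v)"

definition eigenspace :: "real^'n^'n \<Rightarrow> real \<Rightarrow> (real^'n) set" where
  "eigenspace M l = {v. M *v v = l *\<^sub>R v}"

definition lambda_min :: "real^'n^'n \<Rightarrow> real" where
  "lambda_min M = Min {l. mat_eigenvalue M l}"

definition outer :: "real^'n \<Rightarrow> real^'n \<Rightarrow> real^'n^'n" where
  "outer u v = (\<chi> i j. u $ i * v $ j)"

definition qep_feasible ::
  "real^'n^'n \<Rightarrow> real^'m^'n \<Rightarrow> real^'n^'n \<Rightarrow> real \<Rightarrow> real^'n \<Rightarrow> real \<Rightarrow> real^'n \<Rightarrow> bool" where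
  "qep_feasible A C P \<gamma> b0 l z \<longleftrightarrow>
     z \<noteq> 0 \<and> transpose C *v z = 0 \<and>
     ((P ** A ** P - l *\<^sub>R mat 1) ** (P ** A ** P - l *\<^sub>R mat 1)) *v z
       = (inverse (\<gamma>\<^sup>2) *\<^sub>R outer b0 b0) *v z"

definition qep_minimizer ::
  "real^'n^'n \<Rightarrow> real^'m^'n \<Rightarrow> real^'n^'n \<Rightarrow> real \<Rightarrow> real^'n \<Rightarrow> real \<Rightarrow> real^'n \<Rightarrow> bool" where
  "qep_minimizer A C P \<gamma> b0 l z \<longleftrightarrow>
     qep_feasible A C P \<gamma> b0 l z \<and> (\<forall>l' z'. qep_feasible A C P \<gamma> b0 l' z' \<longrightarrow> l \<le> l')"

end

theory Submission
  imports Defs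
begin

lemma inner_mat_transpose:
  fixes M :: "real^'a^'b"
  shows "(M *v x) \<bullet> y = x \<bullet> (transpose M *v y)"
  by (metis dot_lmul_matrix inner_commute transpose_matrix_vector)

lemma sym_inner:
  fixes M :: "real^'a^'a"
  assumes "transpose M = M"
  shows "(M *v x) \<bullet> y = x \<bullet> (M *v y)"
  by (metis assms inner_mat_transpose)

lemma scaleR_mv:
  fixes M :: "real^'a^'b"
  shows "(c *\<^sub>R M) *v z = c *\<^sub>R (M *v z)"
  by (simp add: vec_eq_iff matrix_vector_mult_def sum_distrib_left algebra_simps)

lemma shift_mv:
  fixes H :: "real^'a^'a"
  shows "(H - l *\<^sub>R mat 1) *v v = H *v v - l *\<^sub>R v"
  by (simp add: matrix_vector_mult_diff_rdistrib scaleR_mv)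

lemma outer_mv: "outer b b *v z = (b \<bullet> z) *\<^sub>R b"
  by (simp add: vec_eq_iff matrix_vector_mult_def outer_def inner_vec_def sum_distrib_left
      algebra_simps)

lemma gram_invertible:
  fixes C :: "real^'m^'n"
  assumes "rank C = CARD('m)"
  shows "invertible (transpose C ** C)"
proof -
  have inj: "inj ((*v) C)" using assms full_rank_injective by blast
  have "\<forall>x. (transpose C ** C) *v x = 0 \<longrightarrow> x = 0"
  proof (intro allI impI)
    fix x assume "(transpose C ** C) *v x = 0"
    then have "x \<bullet> ((transpose C ** C) *v x) = 0" by simp
    then have "(C *v x) \<bullet> (C *v x) = 0"
      by (metis inner_mat_transpose matrix_vector_mul_assoc)
    then have "C *v x = C *v 0" by simp
    then show "x = 0" using inj by (meson injD)
  qed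
  then show ?thesis
    using matrix_left_invertible_ker invertible_left_inverse by blast
qed

lemma transpose_minus:
  fixes A B :: "real^'a^'b"
  shows "transpose (A - B) = transpose A - transpose B"
  by (simp add: vec_eq_iff transpose_def)

lemma proj_facts:
  fixes C :: "real^'m^'n" and P :: "real^'n^'n"
  assumes rk: "rank C = CARD('m)"
    and Pdef: "P = mat 1 - C ** matrix_inv (transpose C ** C) ** transpose C"
  shows "transpose C *v (P *v w) = 0"
    and "transpose C *v z = 0 \<Longrightarrow> P *v z = z"
    and "transpose P = P"
proof -
  define X where "X = transpose C ** C"
  define G where "G = matrix_inv X"
  have "\<exists>A'. X ** A' = mat 1 \<and> A' ** X = mat 1"
    using gram_invertible[OF rk] unfolding X_def invertible_def by blast
  then have XG: "X ** G = mat 1 \<and> G ** X = mat 1"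
    unfolding G_def matrix_inv_def by (rule someI_ex)
  have XT: "transpose X = X" by (simp add: X_def matrix_transpose_mul)
  have "transpose G ** X = mat 1"
    by (metis XG XT matrix_transpose_mul transpose_mat)
  then have GT: "transpose G = G"
    by (metis XG matrix_mul_assoc matrix_mul_lid matrix_mul_rid)
  have Pv: "P *v w = w - C *v (G *v (transpose C *v w))" for w
    by (simp add: Pdef G_def X_def matrix_vector_mult_diff_rdistrib matrix_vector_mul_assoc matrix_mul_assoc del: transpose_matrix_vector)
  show "transpose C *v (P *v w) = 0"
  proof -
    have "transpose C *v (C *v (G *v (transpose C *v w))) = (X ** G) *v (transpose C *v w)"
      by (simp add: X_def matrix_vector_mul_assoc matrix_mul_assoc del: transpose_matrix_vector)
    then show ?thesis using XG by (simp add: Pv matrix_vector_mult_diff_distrib)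
  qed
  show "transpose C *v z = 0 \<Longrightarrow> P *v z = z" by (simp add: Pv)
  show "transpose P = P"
    by (simp add: Pdef transpose_minus matrix_transpose_mul GT matrix_mul_assoc flip: G_def X_def)
qed

lemma S1_facts:
  fixes C :: "real^'m^'n" and P :: "real^'n^'n" and S1 :: "real^'k^'n"
  assumes PC: "\<And>w. transpose C *v (P *v w) = 0"
    and Pid: "\<And>z. transpose C *v z = 0 \<Longrightarrow> P *v z = z"
    and PT: "transpose P = P"
    and SS: "transpose S1 ** S1 = mat 1"
    and rg: "range (\<lambda>x. S1 *v x) = {v. transpose C *v v = 0}"
  shows "transpose S1 *v (S1 *v y) = y"
    and "P *v w = S1 *v (transpose S1 *v w)"
    and "P *v (S1 *v y) = S1 *v y"
proof -
  show SSy: "transpose S1 *v (S1 *v y) = y" for y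
    by (simp add: matrix_vector_mul_assoc SS del: transpose_matrix_vector)
  show PS: "P *v (S1 *v y) = S1 *v y" for y
    using rg Pid by blast
  have "P *v w \<in> range (\<lambda>x. S1 *v x)" using rg PC by blast
  then obtain x where x: "P *v w = S1 *v x" by blast
  define d where "d = transpose S1 *v (w - P *v w)"
  have PP: "P *v (w - P *v w) = 0"
    using Pid[OF PC[of w]] by (simp add: matrix_vector_mult_diff_distrib)
  have "d \<bullet> d = (w - P *v w) \<bullet> (S1 *v d)"
    unfolding d_def by (metis inner_mat_transpose transpose_transpose)
  also have "\<dots> = (w - P *v w) \<bullet> (P *v (S1 *v d))" using PS by simp
  also have "\<dots> = 0" using sym_inner[OF PT] PP by (metis inner_zero_left)
  finally have "d = 0" by simp
  then have "transpose S1 *v (P *v w) = transpose S1 *v w"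
    unfolding d_def by (simp add: matrix_vector_mult_diff_distrib del: transpose_matrix_vector)
  then show "P *v w = S1 *v (transpose S1 *v w)" using x SSy by metis
qed

lemma eig_finite:
  fixes H :: "real^'k^'k"
  assumes HT: "transpose H = H"
  shows "finite {l. mat_eigenvalue H l}"
proof -
  define E where "E = {l. mat_eigenvalue H l}"
  define f where "f l = (SOME v. v \<noteq> 0 \<and> H *v v = l *\<^sub>R v)" for l
  have fE: "f l \<noteq> 0 \<and> H *v f l = l *\<^sub>R f l" if "l \<in> E" for l
    using that unfolding E_def mat_eigenvalue_def f_def by (metis (mono_tags, lifting) mem_Collect_eq someI_ex)
  have orth: "f l \<bullet> f l' = 0" if "l \<in> E" "l' \<in> E" "l \<noteq> l'" for l l'
  proof -
    have "l * (f l \<bullet> f l') = (H *v f l) \<bullet> f l'" using fE[OF that(1)] by simp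
    also have "\<dots> = f l \<bullet> (H *v f l')" by (rule sym_inner[OF HT])
    also have "\<dots> = l' * (f l \<bullet> f l')" using fE[OF that(2)] by simp
    finally show ?thesis using that(3) by simp
  qed
  have inj: "inj_on f E"
  proof (rule inj_onI)
    fix l l' assume "l \<in> E" "l' \<in> E" "f l = f l'"
    then show "l = l'" using orth fE by (metis inner_eq_zero_iff)
  qed
  have "pairwise orthogonal (f ` E)"
    unfolding pairwise_def orthogonal_def using orth inj
    by (smt (verit, best) imageE)
  moreover have "0 \<notin> f ` E" using fE by auto
  ultimately have "independent (f ` E)" by (rule pairwise_orthogonal_independent)
  then have "finite (f ` E)" using independent_bound by blast
  then show ?thesis using inj finite_imageD unfolding E_def by blast
qed

lemma det_cont:
  fixes M :: "real \<Rightarrow> real^'k^'k"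
  assumes "\<And>i j. continuous_on S (\<lambda>l. M l $ i $ j)"
  shows "continuous_on S (\<lambda>l. det (M l))"
  unfolding det_def by (intro continuous_on_sum continuous_on_mult continuous_on_const continuous_on_prod assms)

lemma core:
  fixes H :: "real^'k^'k" and g u :: "real^'k"
  assumes HT: "transpose H = H"
    and lb: "\<And>l. mat_eigenvalue H l \<Longrightarrow> m \<le> l"
    and Hu: "H *v u = m *\<^sub>R u"
    and gu: "g \<bullet> u \<noteq> 0"
    and gam: "\<gamma> > 0"
  shows "\<exists>l y. l < m \<and> y \<noteq> 0 \<and>
     (H - l *\<^sub>R mat 1) *v ((H - l *\<^sub>R mat 1) *v y) = (inverse (\<gamma>\<^sup>2) * (g \<bullet> y)) *\<^sub>R g"
proof -
  define Ml where "Ml l = H - l *\<^sub>R mat 1" for l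
  have Mlv: "Ml l *v x = H *v x - l *\<^sub>R x" for l x
    unfolding Ml_def by (rule shift_mv)
  have Mlsym: "(Ml l *v x) \<bullet> y = x \<bullet> (Ml l *v y)" for l x y
    by (simp add: Mlv inner_diff_left inner_diff_right sym_inner[OF HT])
  have det_nz: "det (Ml l) \<noteq> 0" if "l < m" for l
  proof
    assume "det (Ml l) = 0"
    then have "\<not> invertible (Ml l)" using invertible_det_nz by blast
    then have "\<not> (\<exists>B. B ** Ml l = mat 1)" using invertible_left_inverse by blast
    then obtain x where x: "Ml l *v x = 0" "x \<noteq> 0"
      using matrix_left_invertible_ker by blast
    then have "H *v x = l *\<^sub>R x" by (simp add: Mlv)
    then have "mat_eigenvalue H l" unfolding mat_eigenvalue_def using x by blast
    then show False using lb that by fastforce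
  qed
  define vv where "vv l = (\<chi> k. det(\<chi> i j. if j=k then g$i else Ml l$i$j) / det (Ml l))" for l
  have vv: "Ml l *v vv l = g" if "l < m" for l
    using cramer[OF det_nz[OF that]] unfolding vv_def by blast
  have "\<exists>K>0. \<forall>x. norm (H *v x) \<le> norm x * K"
    using bounded_linear.pos_bounded[OF matrix_vector_mul_bounded_linear] by blast
  then obtain K where K: "K > 0" "\<And>x. norm (H *v x) \<le> norm x * K" by blast
  define f where "f l = vv l \<bullet> vv l" for l
  have u0: "u \<noteq> 0" using gu by auto
  have g0: "g \<noteq> 0" using gu by auto
  have low: "f l < \<gamma>\<^sup>2" if "l < m" "l \<le> -K - norm g / \<gamma> - 1" for l
  proof -
    define v where "v = vv l"
    have "v \<bullet> g = v \<bullet> (H *v v) - l * (v \<bullet> v)"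
      using vv[OF that(1)] unfolding v_def[symmetric] Mlv by (metis inner_diff_right inner_scaleR_right)
    moreover have "v \<bullet> (H *v v) \<ge> - (norm v * (norm v * K))"
    proof -
      have "\<bar>v \<bullet> (H *v v)\<bar> \<le> norm v * norm (H *v v)" by (rule Cauchy_Schwarz_ineq2)
      also have "\<dots> \<le> norm v * (norm v * K)" using K(2) by (simp add: mult_left_mono)
      finally show ?thesis by linarith
    qed
    moreover have "v \<bullet> g \<le> norm v * norm g" by (rule norm_cauchy_schwarz)
    moreover have "v \<bullet> v = norm v * norm v" by (metis power2_eq_square power2_norm_eq_inner)
    ultimately have "(-K - l) * (norm v * norm v) \<le> norm v * norm g"
      by (simp add: algebra_simps)
    moreover have "(-K - l) \<ge> norm g / \<gamma> + 1" using that by simp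
    ultimately have A: "(norm g / \<gamma> + 1) * (norm v * norm v) \<le> norm v * norm g"
      by (meson mult_right_mono order_trans zero_le_square)
    have "norm v < \<gamma>"
    proof (rule ccontr)
      assume "\<not> norm v < \<gamma>"
      then have nv: "norm v \<ge> \<gamma>" by simp
      then have nv0: "norm v > 0" using gam by linarith
      from A have "((norm g / \<gamma> + 1) * norm v) * norm v \<le> norm g * norm v"
        by (simp add: algebra_simps)
      then have B: "(norm g / \<gamma> + 1) * norm v \<le> norm g"
        using nv0 mult_le_cancel_right_pos by blast
      have "(norm g / \<gamma> + 1) * norm v \<ge> (norm g / \<gamma> + 1) * \<gamma>"
        using nv gam by (intro mult_left_mono) auto
      also have "(norm g / \<gamma> + 1) * \<gamma> = norm g + \<gamma>" using gam by (simp add: field_simps)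
      finally show False using B gam by simp
    qed
    then show ?thesis unfolding f_def v_def[symmetric]
      by (metis norm_ge_zero power2_norm_eq_inner power_strict_mono zero_less_numeral)
  qed
  define \<delta> where "\<delta> = \<bar>g \<bullet> u\<bar> / (2 * \<gamma> * norm u)"
  have \<delta>0: "\<delta> > 0" unfolding \<delta>_def using gu u0 gam by simp
  have high: "\<gamma>\<^sup>2 < f l" if "l < m" "m - l \<le> \<delta>" for l
  proof -
    define v where "v = vv l"
    have "u \<bullet> g = u \<bullet> (Ml l *v v)" using vv[OF that(1)] by (simp add: v_def)
    also have "\<dots> = (Ml l *v u) \<bullet> v" by (simp add: Mlsym)
    also have "\<dots> = (m - l) * (u \<bullet> v)" by (simp add: Mlv Hu algebra_simps)
    finally have ug: "u \<bullet> g = (m - l) * (u \<bullet> v)" .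
    have "\<bar>g \<bullet> u\<bar> = (m - l) * \<bar>u \<bullet> v\<bar>" using ug that(1) by (simp add: inner_commute abs_mult)
    also have "\<dots> \<le> \<delta> * (norm u * norm v)"
      using that Cauchy_Schwarz_ineq2[of u v] by (intro mult_mono) auto
    also have "\<dots> = \<bar>g \<bullet> u\<bar> * norm v / (2 * \<gamma>)" unfolding \<delta>_def using u0 by simp
    finally have "\<bar>g \<bullet> u\<bar> * (2 * \<gamma>) \<le> \<bar>g \<bullet> u\<bar> * norm v" using gam by (simp add: field_simps)
    then have "2 * \<gamma> \<le> norm v" using gu by simp
    then have "(2 * \<gamma>)\<^sup>2 \<le> (norm v)\<^sup>2" using gam by (intro power_mono) auto
    then have "(2 * \<gamma>)\<^sup>2 \<le> f l" unfolding f_def v_def[symmetric]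
      by (simp add: power2_norm_eq_inner[symmetric])
    moreover have "\<gamma>\<^sup>2 < (2 * \<gamma>)\<^sup>2" using gam by (simp add: power_mult_distrib)
    ultimately show ?thesis by linarith
  qed
  define b where "b = m - \<delta>"
  define a where "a = min b (-K - norm g / \<gamma> - 1)"
  have ab: "a \<le> b" "b < m" "a < m" using \<delta>0 unfolding a_def b_def by auto
  have fa: "f a < \<gamma>\<^sup>2" using low ab unfolding a_def by simp
  have fb: "\<gamma>\<^sup>2 < f b" using high ab unfolding b_def by simp
  have cont: "continuous_on {a..b} f"
  proof -
    have ent: "continuous_on {a..b} (\<lambda>l. Ml l $ i $ j)" for i j
      unfolding Ml_def by (simp add: mat_def) (auto intro!: continuous_intros)
    have "continuous_on {a..b} (\<lambda>l. vv l $ k)" for k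
      unfolding vv_def
    proof (simp, rule continuous_on_divide)
      show "continuous_on {a..b} (\<lambda>x. det (\<chi> i j. if j = k then g $ i else Ml x $ i $ j))"
      proof (rule det_cont)
        fix i j show "continuous_on {a..b} (\<lambda>x. (\<chi> i j. if j = k then g $ i else Ml x $ i $ j) $ i $ j)"
          by (cases "j = k") (simp_all add: ent)
      qed
      show "continuous_on {a..b} (\<lambda>x. det (Ml x))"
        by (rule det_cont) (rule ent)
      show "\<forall>x\<in>{a..b}. det (Ml x) \<noteq> 0" using ab det_nz by auto
    qed
    then show ?thesis unfolding f_def inner_vec_def inner_real_def
      by (intro continuous_on_sum continuous_on_mult) auto
  qed
  obtain l where l: "l \<in> {a..b}" "f l = \<gamma>\<^sup>2"
    using IVT'[of f a "\<gamma>\<^sup>2" b] fa fb ab cont by auto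
  have lm: "l < m" using l ab by auto
  obtain y where y: "Ml l *v y = vv l"
    using cramer[OF det_nz[OF lm]] by blast
  have y0: "y \<noteq> 0" using y vv[OF lm] g0 by auto
  have "g \<bullet> y = vv l \<bullet> vv l" using vv[OF lm] y Mlsym by metis
  then have "g \<bullet> y = \<gamma>\<^sup>2" using l f_def by simp
  then have "(inverse (\<gamma>\<^sup>2) * (g \<bullet> y)) *\<^sub>R g = g" using gam by simp
  then show ?thesis using lm y0 y vv[OF lm] unfolding Ml_def by metis
qed

theorem theorem2p11:
  fixes A :: "real^'n^'n" and C :: "real^'m^'n" and b :: "real^'m"
    and S1 :: "real^'k^'n" and n0 b0 :: "real^'n" and g0 :: "real^'k"
    and P :: "real^'n^'n" and H :: "real^'k^'k" and \<gamma> lam :: real and z :: "real^'n"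
  assumes "CARD('m) < CARD('n)"
    and "transpose A = A"
    and "rank C = CARD('m)"
    and "n0 = C *v (matrix_inv (transpose C ** C) *v b)"
    and "norm n0 < 1"
    and "\<gamma> = sqrt (1 - (norm n0)\<^sup>2)"
    and "P = mat 1 - C ** matrix_inv (transpose C ** C) ** transpose C"
    and "b0 = P *v (A *v n0)"
    and "b0 \<noteq> 0"
    and "CARD('k) = CARD('n) - CARD('m)"
    and "transpose S1 ** S1 = mat 1"
    and "range (\<lambda>x. S1 *v x) = {v. transpose C *v v = 0}"
    and "H = transpose S1 ** A ** S1"
    and "g0 = transpose S1 *v b0"
    and "qep_minimizer A C P \<gamma> b0 lam z"
    and "b0 \<bullet> z = 0"
  shows "lam = lambda_min H
    \<and> (\<forall>u \<in> eigenspace H (lambda_min H). g0 \<bullet> u = 0)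
    \<and> mat_eigenvalue (P ** A ** P) (lambda_min H)
    \<and> (\<forall>v \<in> eigenspace (P ** A ** P) (lambda_min H). b0 \<bullet> v = 0)"
proof -
  note AT = assms(2) and rk = assms(3) and n0n = assms(5) and gdef = assms(6)
    and Pdef = assms(7) and b0def = assms(8) and SS = assms(11) and rg = assms(12)
    and Hdef = assms(13) and g0def = assms(14) and mini = assms(15) and bz = assms(16)
  note PC = proj_facts(1)[OF rk Pdef] and Pid = proj_facts(2)[OF rk Pdef]
    and PT = proj_facts(3)[OF rk Pdef]
  note SSy = S1_facts(1)[OF PC Pid PT SS rg] and PSS = S1_facts(2)[OF PC Pid PT SS rg]
    and PS = S1_facts(3)[OF PC Pid PT SS rg]
  have gam: "\<gamma> > 0"
  proof -
    have "(norm n0)\<^sup>2 < 1" using n0n by (simp add: power_less_one_iff abs_less_iff)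
    then show ?thesis using gdef by simp
  qed
  define Q where "Q = P ** A ** P"
  have Qv: "Q *v x = P *v (A *v (P *v x))" for x
    by (simp add: Q_def matrix_vector_mul_assoc matrix_mul_assoc)
  have QT: "transpose Q = Q"
    by (simp add: Q_def matrix_transpose_mul PT AT matrix_mul_assoc)
  have HT: "transpose H = H"
    by (simp add: Hdef matrix_transpose_mul AT matrix_mul_assoc)
  have S1inj: "S1 *v y = 0 \<Longrightarrow> y = 0" for y using SSy[of y] by simp
  have QS: "Q *v (S1 *v y) = S1 *v (H *v y)" for y
  proof -
    have "Q *v (S1 *v y) = P *v (A *v (S1 *v y))" unfolding Qv using PS[of y] by simp
    also have "\<dots> = S1 *v (transpose S1 *v (A *v (S1 *v y)))" by (rule PSS)
    also have "\<dots> = S1 *v (H *v y)"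
      by (simp add: Hdef matrix_vector_mul_assoc matrix_mul_assoc del: transpose_matrix_vector)
    finally show ?thesis .
  qed
  have QSl: "(Q - l *\<^sub>R mat 1) *v (S1 *v y) = S1 *v ((H - l *\<^sub>R mat 1) *v y)" for l y
    by (simp add: shift_mv QS matrix_vector_mult_diff_distrib matrix_vector_mult_scaleR)
  have bS: "b0 = S1 *v g0"
  proof -
    have "P *v b0 = b0" using Pid PC b0def by metis
    then show ?thesis using PSS[of b0] g0def by simp
  qed
  have bSy: "b0 \<bullet> (S1 *v y) = g0 \<bullet> y" for y
    by (metis g0def inner_commute inner_mat_transpose)
  have feas: "qep_feasible A C P \<gamma> b0 l (S1 *v y)"
    if y0: "y \<noteq> 0" and eq: "(H - l *\<^sub>R mat 1) *v ((H - l *\<^sub>R mat 1) *v y)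
        = (inverse (\<gamma>\<^sup>2) * (g0 \<bullet> y)) *\<^sub>R g0" for l y
  proof -
    have "S1 *v y \<noteq> 0" using S1inj y0 by blast
    moreover have "transpose C *v (S1 *v y) = 0" using rg by blast
    moreover have "((Q - l *\<^sub>R mat 1) ** (Q - l *\<^sub>R mat 1)) *v (S1 *v y)
        = (inverse (\<gamma>\<^sup>2) *\<^sub>R outer b0 b0) *v (S1 *v y)"
    proof -
      have "((Q - l *\<^sub>R mat 1) ** (Q - l *\<^sub>R mat 1)) *v (S1 *v y)
          = S1 *v ((inverse (\<gamma>\<^sup>2) * (g0 \<bullet> y)) *\<^sub>R g0)"
        by (simp add: matrix_vector_mul_assoc[symmetric] QSl eq del: transpose_matrix_vector)
      also have "\<dots> = (inverse (\<gamma>\<^sup>2) * (g0 \<bullet> y)) *\<^sub>R b0"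
        by (simp add: bS matrix_vector_mult_scaleR)
      also have "\<dots> = (inverse (\<gamma>\<^sup>2) *\<^sub>R outer b0 b0) *v (S1 *v y)"
        by (simp add: scaleR_mv outer_mv bSy)
      finally show ?thesis .
    qed
    ultimately show ?thesis unfolding qep_feasible_def Q_def by blast
  qed
  have zf: "qep_feasible A C P \<gamma> b0 lam z" and zmin: "\<And>l' z'. qep_feasible A C P \<gamma> b0 l' z' \<Longrightarrow> lam \<le> l'"
    using mini unfolding qep_minimizer_def by auto
  have z0: "z \<noteq> 0" and Cz: "transpose C *v z = 0"
    and zeq: "((Q - lam *\<^sub>R mat 1) ** (Q - lam *\<^sub>R mat 1)) *v z = (inverse (\<gamma>\<^sup>2) *\<^sub>R outer b0 b0) *v z"
    using zf unfolding qep_feasible_def Q_def by auto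
  define M where "M = Q - lam *\<^sub>R mat 1"
  have Msym: "(M *v x) \<bullet> w = x \<bullet> (M *v w)" for x w
    by (simp add: M_def shift_mv inner_diff_left inner_diff_right sym_inner[OF QT])
  have "M *v (M *v z) = 0"
    using zeq bz by (simp add: M_def matrix_vector_mul_assoc scaleR_mv outer_mv)
  then have "(M *v z) \<bullet> (M *v z) = 0" by (simp add: Msym)
  then have Mz: "M *v z = 0" by simp
  then have Qz: "Q *v z = lam *\<^sub>R z" by (simp add: M_def shift_mv)
  obtain y where zy: "z = S1 *v y" using Cz rg by (metis (mono_tags, lifting) mem_Collect_eq rangeE)
  have y0: "y \<noteq> 0" using z0 zy by auto
  have "S1 *v ((H - lam *\<^sub>R mat 1) *v y) = 0" using Mz zy QSl M_def by metis
  then have "(H - lam *\<^sub>R mat 1) *v y = 0" using S1inj by blast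
  then have "H *v y = lam *\<^sub>R y" by (simp add: shift_mv)
  then have lamE: "mat_eigenvalue H lam" unfolding mat_eigenvalue_def using y0 by blast
  define E where "E = {l. mat_eigenvalue H l}"
  have finE: "finite E" unfolding E_def by (rule eig_finite[OF HT])
  have muE: "mat_eigenvalue H (lambda_min H)"
    using finE lamE Min_in unfolding lambda_min_def E_def by fastforce
  have mule: "lambda_min H \<le> l" if "mat_eigenvalue H l" for l
    using finE that Min_le unfolding lambda_min_def E_def by fastforce
  define \<mu> where "\<mu> = lambda_min H"
  have perp: "\<forall>u \<in> eigenspace H \<mu>. g0 \<bullet> u = 0"
  proof (rule ccontr)
    assume "\<not> ?thesis"
    then obtain u where u: "H *v u = \<mu> *\<^sub>R u" "g0 \<bullet> u \<noteq> 0" unfolding eigenspace_def by auto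
    obtain l y' where ly: "l < \<mu>" "y' \<noteq> 0"
      "(H - l *\<^sub>R mat 1) *v ((H - l *\<^sub>R mat 1) *v y') = (inverse (\<gamma>\<^sup>2) * (g0 \<bullet> y')) *\<^sub>R g0"
      using core[OF HT _ u gam] mule unfolding \<mu>_def by blast
    have "lam \<le> l" using zmin feas[OF ly(2,3)] by blast
    moreover have "\<mu> \<le> lam" using mule lamE unfolding \<mu>_def by blast
    ultimately show False using ly(1) by simp
  qed
  obtain u where u: "u \<noteq> 0" "H *v u = \<mu> *\<^sub>R u" using muE unfolding mat_eigenvalue_def \<mu>_def by blast
  have "g0 \<bullet> u = 0" using perp u unfolding eigenspace_def by blast
  then have "(H - \<mu> *\<^sub>R mat 1) *v ((H - \<mu> *\<^sub>R mat 1) *v u) = (inverse (\<gamma>\<^sup>2) * (g0 \<bullet> u)) *\<^sub>R g0"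
    using u by (simp add: shift_mv)
  then have "lam \<le> \<mu>" using zmin feas u(1) by blast
  moreover have "\<mu> \<le> lam" using mule lamE unfolding \<mu>_def by blast
  ultimately have lammu: "lam = \<mu>" by simp
  have eigQ: "mat_eigenvalue Q \<mu>" unfolding mat_eigenvalue_def using z0 Qz lammu by blast
  have perpQ: "\<forall>v \<in> eigenspace Q \<mu>. b0 \<bullet> v = 0"
  proof
    fix v assume "v \<in> eigenspace Q \<mu>"
    then have Qv': "Q *v v = \<mu> *\<^sub>R v" unfolding eigenspace_def by simp
    have PP: "P *v (P *v x) = P *v x" for x using Pid PC by blast
    have "Q *v (P *v v) = Q *v v" by (simp add: Qv PP)
    also have "\<dots> = P *v (Q *v v)" by (simp add: Qv PP)
    also have "\<dots> = \<mu> *\<^sub>R (P *v v)" by (simp add: Qv' matrix_vector_mult_scaleR)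
    finally have QPv: "Q *v (P *v v) = \<mu> *\<^sub>R (P *v v)" .
    define y where "y = transpose S1 *v v"
    have Pvy: "P *v v = S1 *v y" using PSS y_def by simp
    have "S1 *v (H *v y) = S1 *v (\<mu> *\<^sub>R y)" using QPv Pvy QS by (simp add: matrix_vector_mult_scaleR)
    then have "H *v y = \<mu> *\<^sub>R y" by (metis SSy)
    then have "g0 \<bullet> y = 0" using perp unfolding eigenspace_def by blast
    have "b0 \<bullet> v = (P *v b0) \<bullet> v" using Pid PC b0def by metis
    also have "\<dots> = b0 \<bullet> (P *v v)" by (rule sym_inner[OF PT])
    also have "\<dots> = g0 \<bullet> y" by (simp add: Pvy bSy)
    finally show "b0 \<bullet> v = 0" using \<open>g0 \<bullet> y = 0\<close> by simp
  qed
  show ?thesis using lammu perp eigQ perpQ unfolding \<mu>_def Q_def by blast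
qed

end
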